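(* Let $P_S,H_{SR},H_{SD},H_{RD},\sigma_a^2,\sigma_b^2>0$, $\eta\in(0,1]$, assume $\sigma_R^2=\sigma_D^2=\sigma_a^2+\sigma_b^2$ and $H_{SR}>H_{SD}$, and let $\rho^{\mathrm{th}}=1-\frac{H_{SD}\sigma_b^2}{H_{SR}\sigma_D^2-H_{SD}\sigma_a^2}$. Fix $\rho\in(0,\rho^{\mathrm{th}})$ and set $C^{(PS)}_{SR}=\log\big(1+\frac{(1-\rho)P_SH_{SR}}{(1-\rho)\sigma_a^2+\sigma_b^2}\big)$, $m=P_SH_{SD}/\sigma_D^2$, $b=C_{SD}=\log(1+m)$, $a'=C^{(PS)}_{SR}-C_{SD}$, $c'=\eta\rho H_{SR}H_{RD}P_S/\sigma_D^2$. Then the problem $$\max_{\lambda\in(0,1)}\min\Big\{\lambda C^{(PS)}_{SR},\ \lambda b+(1-\lambda)\log\Big(1+m+\frac{c'\lambda}{1-\lambda}\Big)\Big\}$$ is solved by $\lambda^*=\max\{\lambda_1,\lambda_2\}$, where $$\lambda_1=\frac{-\frac1{a'}\mathcal W_{-1}\!\big(-\frac{a'}{c'}e^{-\frac{a'(1+m)}{c'}}\big)-\frac{1+m}{c'}}{1-\frac1{a'}\mathcal W_{-1}\!\big(-\frac{a'}{c'}e^{-\frac{a'(1+m)}{c'}}\big)-\frac{1+m}{c'}},\qquad \lambda_2=\frac{e^{\mathcal W_0\left(\frac{c'-(1+m)}{e^{1+b}}\right)+b+1}-(1+m)}{e^{\mathcal W_0\left(\frac{c'-(1+m)}{e^{1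+b}}\right)+b+1}+c'-(1+m)}.$$
   Context: $\log$ is the natural logarithm; $\mathcal W_0,\mathcal W_{-1}$ are the principal and lower real branches of the Lambert W function. This is the power-splitting relay protocol with energy accumulation (maximal ratio combining) at the destination for fixed power-splitting ratio $\rho$, with relay forwarding power $\eta\rho H_{SR}P_S\lambda/(1-\lambda)$. *)

theory Defs
  imports Complex_Main
begin

text \<open>The principal branch W0 is the solution w with w \<ge> -1 (defined for y \<ge> -1/e);
  the lower branch Wm1 is the solution w with w \<le> -1 (defined for -1/e \<le> y < 0).\<close>

definition lambertW0 :: "real \<Rightarrow> real" where
  "lambertW0 y = (THE w. w \<ge> -1 \<and> w * exp w = y)"

definition lambertWm1 :: "real \<Rightarrow> real" where
  "lambertWm1 y = (THE w. w \<le> -1 \<and> w * exp w = y)"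

end

theory Submission
  imports Defs
begin

lemma exp_strict: "d \<noteq> 0 \<Longrightarrow> 1 + d < exp (d::real)"
  using exp_minus_greater[of "-d"] by simp

lemma gdec: fixes a b :: real assumes "a < b" "b \<le> -1" shows "b * exp b < a * exp a"
proof -
  define d where "d = b - a"
  have d: "d > 0" using assms d_def by simp
  have e: "d < exp d - 1" using exp_strict[of d] d by simp
  have "1 * d \<le> (-b) * d" using d assms by (intro mult_right_mono) auto
  then have "d \<le> (-b) * d" by simp
  also have "... < (-b) * (exp d - 1)" using e assms by (intro mult_strict_left_mono) auto
  finally have "b * exp d < b - d" by (simp add: algebra_simps)
  then have "a > b * exp d" unfolding d_def by simp
  then have "a * exp a > b * exp d * exp a" by (simp add: mult_strict_right_mono)
  moreover have "exp d * exp a = exp b" using d_def by (simp add: exp_add[symmetric])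
  ultimately show ?thesis by (simp add: mult.assoc)
qed

lemma ginc: fixes a b :: real assumes "a < b" "-1 \<le> a" shows "a * exp a < b * exp b"
proof -
  define d where "d = b - a"
  have d: "d > 0" using assms d_def by simp
  have e: "1 - d < exp (-d)" using exp_minus_greater[of d] d by simp
  have e2: "exp d - 1 < d * exp d"
  proof -
    have "exp d * (1 - d) < exp d * exp (-d)" using e by simp
    then show ?thesis by (simp add: exp_minus field_simps)
  qed
  have "a * (1 - exp d) \<le> exp d - 1"
  proof -
    have "exp d > 1" using d by simp
    then have "a * (1 - exp d) = (-a) * (exp d - 1)" by (simp add: algebra_simps)
    also have "... \<le> 1 * (exp d - 1)" using assms \<open>exp d > 1\<close> by (intro mult_right_mono) auto
    finally show ?thesis by simp
  qed
  with e2 have "a < (a + d) * exp d" by (simp add: algebra_simps)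
  then have "a < b * exp d" using d_def by simp
  then have "a * exp a < b * exp d * exp a" by (simp add: mult_strict_right_mono)
  moreover have "exp d * exp a = exp b" using d_def by (simp add: exp_add[symmetric])
  ultimately show ?thesis by (simp add: mult.assoc)
qed

lemma Wm1_eq: assumes "w \<le> -1" "w * exp w = y" shows "lambertWm1 y = w"
  unfolding lambertWm1_def
proof (rule the_equality)
  show "w \<le> -1 \<and> w * exp w = y" using assms by simp
  fix v assume v: "v \<le> -1 \<and> v * exp v = y"
  show "v = w"
  proof (rule ccontr)
    assume "v \<noteq> w"
    then consider "v < w" | "w < v" by linarith
    then show False using gdec[of v w] gdec[of w v] v assms by (cases, auto)
  qed
qed

lemma W0_eq: assumes "w \<ge> -1" "w * exp w = y" shows "lambertW0 y = w"
  unfolding lambertW0_def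
proof (rule the_equality)
  show "w \<ge> -1 \<and> w * exp w = y" using assms by simp
  fix v assume v: "v \<ge> -1 \<and> v * exp v = y"
  show "v = w"
  proof (rule ccontr)
    assume "v \<noteq> w"
    then consider "v < w" | "w < v" by linarith
    then show False using ginc[of v w] ginc[of w v] v assms by (cases, auto)
  qed
qed

lemma W0_exists: fixes z :: real assumes "z > - exp (-1)"
  shows "\<exists>w. w > -1 \<and> w * exp w = z"
proof -
  define M where "M = max z 0"
  have "(-1) * exp (-1) \<le> z" using assms by simp
  moreover have "z \<le> M * exp M"
  proof (cases "z \<ge> 0")
    case True
    then have "z * 1 \<le> z * exp z" by (intro mult_left_mono) auto
    then show ?thesis using True M_def by simp
  next
    case False then show ?thesis using M_def by simp
  qed
  moreover have "-1 \<le> M" using M_def by simp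
  ultimately obtain w where w: "-1 \<le> w" "w \<le> M" "w * exp w = z"
    using IVT[of "\<lambda>w. w * exp w" "-1" z M] by (auto intro!: continuous_intros)
  have "w \<noteq> -1" using w assms by auto
  then show ?thesis using w by (intro exI[of _ w]) auto
qed


lemma main:
  fixes C m c' b a' Wl lam1 E lam2 :: real and f :: "real \<Rightarrow> real"
  assumes m: "m > 0" and c: "c' > 0" and bdef: "b = ln (1+m)" and adef: "a' = C - b" and apos: "a' > 0"
  and fdef: "f = (\<lambda>x. min (x*C) (x*b + (1-x)*ln(1+m+c'*x/(1-x))))"
  and Wldef: "Wl = lambertWm1 (- (a'/c') * exp (- (a'*(1+m)/c')))"
  and l1def: "lam1 = (- (1/a') * Wl - (1+m)/c') / (1 - (1/a')*Wl - (1+m)/c')"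
  and Edef: "E = exp (lambertW0 ((c' - (1+m))/exp(1+b)) + b + 1)"
  and l2def: "lam2 = (E - (1+m))/(E + c' - (1+m))"
  shows "0 < max lam1 lam2 \<and> max lam1 lam2 < 1 \<and> (\<forall>lam. 0 < lam \<and> lam < 1 \<longrightarrow> f lam \<le> f (max lam1 lam2))"
proof -
  define A where "A = 1 + m"
  have A: "A > 1" using m A_def by simp
  have bA: "b = ln A" using bdef A_def by simp
  have bpos: "b > 0" using bA A by simp
  have expb: "exp b = A" using bA A by simp
  have Cpos: "C > 0" using adef apos bpos by simp
  define phi where "phi t = ln (A + c'*t) - a'*t" for t
  have phi0: "phi 0 = b" using bA phi_def by simp
  have tang: "phi s - phi t \<le> (c'/(A+c'*t) - a')*(s-t)" if "0 \<le> s" "0 \<le> t" for s t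
  proof -
    have Us: "A + c'*s > 0" using A c that by (simp add: add_pos_nonneg)
    have Ut: "A + c'*t > 0" using A c that by (simp add: add_pos_nonneg)
    have "ln(A+c'*s) - ln(A+c'*t) = ln((A+c'*s)/(A+c'*t))" using Us Ut by (simp add: ln_divide_pos)
    also have "\<dots> \<le> (A+c'*s)/(A+c'*t) - 1" using Us Ut by (intro ln_le_minus_one) simp
    also have "\<dots> = (c'/(A+c'*t))*(s-t)" using Ut by (simp add: field_simps)
    finally show ?thesis unfolding phi_def by (simp add: algebra_simps)
  qed
  define k where "k = a'/(2*c')"
  have kpos: "k > 0" using k_def apos c by simp
  define Q where "Q = k*A - 1 - ln k"
  define T where "T = 2*(abs Q + 1)/a'"
  have Tpos: "T > 0" using T_def apos by simp
  have UT: "A + c'*T > 0" using A c Tpos by (simp add: add_pos_nonneg)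
  have q1: "ln (A + c'*T) = ln (k*(A+c'*T)) - ln k" using kpos UT by (simp add: ln_mult_pos)
  have q2: "ln (k*(A+c'*T)) \<le> k*(A+c'*T) - 1" using kpos UT by (intro ln_le_minus_one) simp
  have q3: "k*(A+c'*T) = k*A + (a'/2)*T" using c by (simp add: k_def field_simps)
  have q4: "(a'/2)*T = abs Q + 1" using apos by (simp add: T_def)
  have q5: "a'*T = 2*(abs Q + 1)" using apos by (simp add: T_def)
  have "phi T = ln (A + c'*T) - a'*T" unfolding phi_def ..
  also have "\<dots> \<le> k*A + (abs Q + 1) - 1 - ln k - 2*(abs Q + 1)" using q1 q2 q3 q4 q5 by linarith
  also have "\<dots> = Q - abs Q - 1" unfolding Q_def by simp
  finally have phiT: "phi T < 0" by linarith
  obtain t1 where t1: "0 \<le> t1" "t1 \<le> T" "phi t1 = 0"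
  proof -
    have "\<forall>x. 0 \<le> x \<and> x \<le> T \<longrightarrow> isCont phi x"
    proof (intro allI impI)
      fix x :: real assume "0 \<le> x \<and> x \<le> T"
      then have "A + c'*x > 0" using A c by (simp add: add_pos_nonneg)
      then show "isCont phi x" unfolding phi_def by (auto intro!: continuous_intros)
    qed
    then show ?thesis using IVT2[of phi T 0 0] phiT phi0 bpos Tpos that by auto
  qed
  have t1pos: "t1 > 0" using t1 phi0 bpos by (cases "t1 = 0") auto
  define U1 where "U1 = A + c'*t1"
  have U1pos: "U1 > 0" using U1_def A c t1 by (simp add: add_pos_nonneg)
  have lnU1: "ln U1 = a'*t1" using t1(3) U1_def phi_def by simp
  have D1neg: "c'/U1 - a' < 0"
  proof -
    have "b - 0 \<le> (c'/U1 - a')*(0 - t1)" using tang[of 0 t1] t1 phi0 U1_def by simp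
    then have "(c'/U1 - a')*t1 < 0" using bpos by simp
    then show ?thesis using t1pos by (simp add: mult_less_0_iff)
  qed
  have phi_nonneg: "phi t \<ge> 0" if "0 \<le> t" "t \<le> t1" for t
  proof -
    define D where "D = c'/(A+c'*t) - a'"
    have h1: "t*(0 - phi t) \<le> t*(D*(t1-t))" using tang[of t1 t] that t1 D_def by (intro mult_left_mono) auto
    have h2: "(t1-t)*(b - phi t) \<le> (t1-t)*(D*(0-t))" using tang[of 0 t] that phi0 D_def by (intro mult_left_mono) auto
    have "(t1-t)*b \<le> t1 * phi t" using h1 h2 by (simp add: algebra_simps)
    moreover have "(t1-t)*b \<ge> 0" using that bpos by simp
    ultimately have "t1 * phi t \<ge> 0" by linarith
    then show ?thesis using t1pos by (simp add: zero_le_mult_iff)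
  qed
  have phi_nonpos: "phi t \<le> 0" if "t1 \<le> t" for t
  proof -
    have "phi t - phi t1 \<le> (c'/U1 - a')*(t-t1)" using tang[of t t1] that t1 U1_def by simp
    moreover have "(c'/U1 - a')*(t-t1) \<le> 0" using D1neg that by (simp add: mult_nonpos_nonneg)
    ultimately show ?thesis using t1 by simp
  qed
  define w1 where "w1 = - a'*U1/c'"
  have w1le: "w1 \<le> -1"
  proof -
    have "c' < a'*U1" using D1neg U1pos by (simp add: field_simps)
    then have "1 < a'*U1/c'" using c by simp
    then show ?thesis unfolding w1_def by simp
  qed
  have U1exp: "U1 = exp (a'*t1)" using lnU1 U1pos by (metis exp_ln)
  have w1alt: "w1 = - (a'*A/c') - a'*t1" using c unfolding w1_def U1_def by (simp add: field_simps)
  have "exp w1 = exp (- (a'*A/c')) / U1" unfolding w1alt U1exp by (simp add: exp_diff)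
  then have "w1 * exp w1 = - (a'/c') * exp (- (a'*A/c'))" unfolding w1_def using U1pos c by (simp add: field_simps)
  then have Wl: "Wl = w1" using Wm1_eq[OF w1le] Wldef A_def by simp
  have num1: "- (1/a') * Wl - (1+m)/c' = t1" unfolding Wl w1_def U1_def A_def[symmetric] using apos c by (simp add: field_simps)
  have lam1: "lam1 = t1/(1+t1)" unfolding l1def using num1 by (simp add: algebra_simps)
  have lam1_01: "0 < lam1" "lam1 < 1" unfolding lam1 using t1pos by auto
  have lam1t: "lam1/(1-lam1) = t1" unfolding lam1 using t1pos by (simp add: field_simps)
  define z where "z = (c' - A)/exp(1+b)"
  have ez: "exp (1+b) = exp 1 * A" using expb by (simp add: exp_add)
  have "z > - exp (-1)"
  proof -
    have "- exp (-1) = (- A)/(exp 1 * A)" using A by (simp add: exp_minus field_simps)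
    also have "\<dots> < (c' - A)/(exp 1 * A)" using A c by (intro divide_strict_right_mono) auto
    finally show ?thesis unfolding z_def ez .
  qed
  then obtain W2 where W2: "W2 > -1" "W2 * exp W2 = z" using W0_exists by blast
  have LW: "lambertW0 ((c' - (1+m))/exp(1+b)) = W2" using W0_eq[of W2 z] W2 z_def A_def by simp
  have Eform: "E = exp (W2 + b + 1)" using Edef LW by simp
  have EA: "E = A * exp (W2 + 1)" unfolding Eform using expb[symmetric]
    by (simp add: exp_add[symmetric] add.commute add.left_commute)
  have EgtA: "E > A" unfolding EA using A W2 by simp
  have lnE: "ln E = W2 + b + 1" unfolding Eform by simp
  have KE: "(c' - A)/E = W2"
  proof -
    have "E = exp (1+b) * exp W2" unfolding Eform by (simp add: exp_add[symmetric] algebra_simps)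
    then have "(c'-A)/E = z / exp W2" unfolding z_def by simp
    also have "\<dots> = W2" using W2(2) by (simp add: field_simps)
    finally show ?thesis .
  qed
  have lam2: "lam2 = (E - A)/(E + c' - A)" using l2def A_def by simp
  have lam2_01: "0 < lam2" "lam2 < 1" unfolding lam2 using EgtA c by auto
  have den2: "E + c' - A > 0" using EgtA c by simp
  have oml2: "1 - lam2 = c'/(E + c' - A)" unfolding lam2 using den2 by (simp add: field_simps)
  have lam2t: "lam2/(1-lam2) = (E - A)/c'" unfolding oml2 unfolding lam2 using den2 c by simp
  define U where "U x = A + c'*(x/(1-x))" for x
  define f2 where "f2 x = x*b + (1-x)*ln (U x)" for x
  define D where "D x = b - ln (U x) + c'/((1-x)*U x)" for x
  have fdef': "f x = min (x*C) (f2 x)" for x unfolding fdef f2_def U_def A_def by (simp add: algebra_simps)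
  have Upos: "U x \<ge> A" if "0 < x" "x < 1" for x
    unfolding U_def using that c by simp
  have tmono: "x/(1-x) \<le> y/(1-y)" if "0 < x" "x \<le> y" "y < 1" for x y :: real
  proof -
    have "x/(1-x) \<le> y/(1-x)" using that by (simp add: divide_right_mono)
    also have "\<dots> \<le> y/(1-y)" using that by (simp add: divide_left_mono)
    finally show ?thesis .
  qed
  have tang2: "f2 y \<le> f2 x + D x * (y - x)" if "0 < x" "x < 1" "0 < y" "y < 1" for x y
  proof -
    define Ux where "Ux = U x"
    define Uy where "Uy = U y"
    define Lx where "Lx = ln Ux"
    define Ly where "Ly = ln Uy"
    define Qx where "Qx = c'/((1-x)*Ux)"
    have Uxp: "Ux > 0" using Upos[OF that(1,2)] A Ux_def by simp
    have Uyp: "Uy > 0" using Upos[OF that(3,4)] A Uy_def by simp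
    have "Ly - Lx = ln (Uy/Ux)" using Uxp Uyp Lx_def Ly_def by (simp add: ln_divide_pos)
    also have "\<dots> \<le> Uy/Ux - 1" using Uxp Uyp by (intro ln_le_minus_one) simp
    finally have e0: "Ly - Lx \<le> (Uy - Ux)/Ux" using Uxp by (simp add: field_simps)
    have e1: "(1-y)*(Ly - Lx) \<le> (1-y)*((Uy - Ux)/Ux)" using e0 that by (intro mult_left_mono) auto
    have e2: "(1-y)*((Uy - Ux)/Ux) = Qx*(y-x)"
    proof -
      have dU: "Uy - Ux = c'*(y-x)/((1-x)*(1-y))" unfolding Uy_def Ux_def U_def using that by (simp add: field_simps)
      have "1 - y \<noteq> 0" "1 - x \<noteq> 0" "Ux \<noteq> 0" using that Uxp by auto
      then have g: "(1-y)*(P/((1-x)*(1-y))/Ux) = P/((1-x)*Ux)" for P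
        by (simp add: divide_simps)
      show ?thesis unfolding dU Qx_def using g[of "c'*(y-x)"] by simp
    qed
    have e3: "f2 x + D x * (y - x) - f2 y = Qx*(y-x) - (1-y)*(Ly - Lx)"
      unfolding f2_def D_def Qx_def Lx_def Ly_def Ux_def Uy_def by (simp add: algebra_simps)
    show ?thesis using e1 e2 e3 by simp
  qed
  have Dform: "D x = b + 1 - ln (U x) + (c' - A)/U x" if "0 < x" "x < 1" for x
  proof -
    have Ux: "U x > 0" using Upos[OF that] A by simp
    have nz: "1 - x \<noteq> 0" using that by simp
    have k1: "c'/(1-x) = U x + (c' - A)" unfolding U_def using nz by (simp add: field_simps)
    have "c'/((1-x)*U x) = (c'/(1-x))/U x" by simp
    also have "\<dots> = 1 + (c' - A)/U x" unfolding k1 using Ux by (simp add: add_divide_distrib)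
    finally have "c'/((1-x)*U x) = 1 + (c' - A)/U x" .
    then show ?thesis unfolding D_def by simp
  qed
  have D_nonpos: "D x \<le> 0" if "0 < x" "x < 1" "U x \<ge> E" for x
  proof -
    define u where "u = U x"
    have up: "u > 0" using that EgtA A u_def by simp
    have "ln E - ln u = ln (E/u)" using up EgtA A by (simp add: ln_divide_pos)
    also have "\<dots> \<le> E/u - 1" using up EgtA A by (intro ln_le_minus_one) simp
    finally have l: "ln E - ln u \<le> (E - u)/u" using up by (simp add: field_simps)
    have "D x = (ln E - ln u) + ((c'-A)/u - (c'-A)/E)"
      using Dform[OF that(1,2)] lnE KE u_def by simp
    also have "\<dots> \<le> (E - u)/u + ((c'-A)/u - (c'-A)/E)" using l by simp
    also have "\<dots> = (E - u)*(E + c' - A)/(u*E)" using up EgtA A by (simp add: field_simps)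
    also have "\<dots> \<le> 0"
    proof -
      have "(E - u)*(E + c' - A) \<le> 0" using that u_def EgtA c by (simp add: mult_nonpos_nonneg)
      then show ?thesis using up EgtA A by (simp add: divide_nonpos_pos)
    qed
    finally show ?thesis .
  qed
  have D_nonneg: "D x \<ge> 0" if "0 < x" "x < 1" "U x \<le> E" for x
  proof -
    define u where "u = U x"
    have uA: "u \<ge> A" using Upos[OF that(1,2)] u_def by simp
    have up: "u > 0" using uA A by simp
    have "ln u - ln E = ln (u/E)" using up EgtA A by (simp add: ln_divide_pos)
    also have "\<dots> \<le> u/E - 1" using up EgtA A by (intro ln_le_minus_one) simp
    finally have l: "ln E - ln u \<ge> (E - u)/E" using EgtA A by (simp add: field_simps)
    have d: "D x = (ln E - ln u) + ((c'-A)/u - (c'-A)/E)"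
      using Dform[OF that(1,2)] lnE KE u_def by simp
    have eq: "(E - u)/E + ((c'-A)/u - (c'-A)/E) = (E - u)*(u + c' - A)/(u*E)" using up EgtA A by (simp add: field_simps)
    have "(E - u)*(u + c' - A) \<ge> 0" using that u_def uA c by simp
    then have "(E - u)*(u + c' - A)/(u*E) \<ge> 0" using up EgtA A by simp
    then show ?thesis using d eq l by linarith
  qed
  have Ulam2: "U lam2 = E" unfolding U_def lam2t using c by simp
  have D2: "D lam2 = 0" using D_nonneg[OF lam2_01] D_nonpos[OF lam2_01] Ulam2 by simp
  have f2max: "f2 y \<le> f2 lam2" if "0 < y" "y < 1" for y
    using tang2[OF lam2_01 that] D2 by simp
  have diff: "f2 x - x*C = (1-x)*phi (x/(1-x))" if "x < 1" for x
  proof -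
    have "(1-x)*(a'*(x/(1-x))) = a'*x" using that by (simp add: field_simps)
    then have "(1-x)*phi (x/(1-x)) = (1-x)*ln (U x) - a'*x" unfolding phi_def U_def
      by (simp add: right_diff_distrib)
    then show ?thesis unfolding f2_def using adef by (simp add: algebra_simps)
  qed
  have f2lam1: "f2 lam1 = lam1 * C" using diff[of lam1] lam1_01 lam1t t1(3) by simp
  have fle1: "f x \<le> x*C" for x unfolding fdef' by simp
  have fle2: "f x \<le> f2 x" for x unfolding fdef' by simp
  have flam1: "f lam1 = lam1 * C" unfolding fdef' f2lam1 by simp
  show ?thesis
  proof (cases "lam1 \<le> lam2")
    case True
    then have mx: "max lam1 lam2 = lam2" by simp
    have "lam1/(1-lam1) \<le> lam2/(1-lam2)" using tmono[OF lam1_01(1) True lam2_01(2)] .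
    then have "phi (lam2/(1-lam2)) \<le> 0" using lam1t phi_nonpos by simp
    then have "(1 - lam2) * phi (lam2/(1-lam2)) \<le> 0" using lam2_01 by (simp add: mult_nonneg_nonpos)
    then have "f2 lam2 \<le> lam2 * C" using diff[of lam2] lam2_01 by simp
    then have flam2: "f lam2 = f2 lam2" unfolding fdef' by simp
    show ?thesis unfolding mx flam2 using lam2_01
    proof (intro conjI allI impI)
      fix lam :: real assume l: "0 < lam \<and> lam < 1"
      show "f lam \<le> f2 lam2"
      proof (cases "lam \<le> lam1")
        case True
        have "f lam \<le> lam*C" by (rule fle1)
        also have "\<dots> \<le> lam1*C" using True Cpos by simp
        also have "\<dots> = f2 lam1" using f2lam1 by simp
        also have "\<dots> \<le> f2 lam2" using f2max lam1_01 by simp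
        finally show ?thesis .
      next
        case False
        show ?thesis using fle2[of lam] f2max[of lam] l by simp
      qed
    qed auto
  next
    case False
    then have mx: "max lam1 lam2 = lam1" by simp
    have "lam2/(1-lam2) \<le> lam1/(1-lam1)" using tmono[of lam2 lam1] False lam1_01 lam2_01 by simp
    then have "c'*(lam2/(1-lam2)) \<le> c'*(lam1/(1-lam1))" using c by (intro mult_left_mono) auto
    then have "U lam2 \<le> U lam1" unfolding U_def by simp
    then have Dl1: "D lam1 \<le> 0" using D_nonpos[OF lam1_01] Ulam2 by simp
    show ?thesis unfolding mx flam1 using lam1_01
    proof (intro conjI allI impI)
      fix lam :: real assume l: "0 < lam \<and> lam < 1"
      show "f lam \<le> lam1 * C"
      proof (cases "lam \<le> lam1")
        case True
        have "f lam \<le> lam*C" by (rule fle1)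
        also have "\<dots> \<le> lam1*C" using True Cpos by simp
        finally show ?thesis .
      next
        case False
        have "f lam \<le> f2 lam" by (rule fle2)
        also have "\<dots> \<le> f2 lam1 + D lam1 * (lam - lam1)" using tang2[OF lam1_01] l by simp
        also have "\<dots> \<le> f2 lam1" using Dl1 False by (simp add: mult_nonpos_nonneg)
        finally show ?thesis using f2lam1 by simp
      qed
    qed auto
  qed
qed


lemma frac_lt_helper: "s > 0 \<Longrightarrow> d > 0 \<Longrightarrow> x*d < y*s \<Longrightarrow> x/s < y/(d::real)"
  by (simp add: divide_simps mult.commute)

theorem corollary2:
  fixes P_S H_SR H_SD H_RD \<sigma>a2 \<sigma>b2 \<sigma>R2 \<sigma>D2 \<eta> \<rho> :: real
  assumes "P_S > 0" "H_SR > 0" "H_SD > 0" "H_RD > 0" "\<sigma>a2 > 0" "\<sigma>b2 > 0"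
    and "0 < \<eta>" "\<eta> \<le> 1"
    and "\<sigma>R2 = \<sigma>a2 + \<sigma>b2" "\<sigma>D2 = \<sigma>a2 + \<sigma>b2"
    and "H_SR > H_SD"
    and "0 < \<rho>" "\<rho> < 1 - (H_SD * \<sigma>b2) / (H_SR * \<sigma>D2 - H_SD * \<sigma>a2)"
  shows
    "let C_SR = ln (1 + (1 - \<rho>) * P_S * H_SR / ((1 - \<rho>) * \<sigma>a2 + \<sigma>b2));
         m = P_S * H_SD / \<sigma>D2;
         b = ln (1 + m);
         a' = C_SR - b;
         c' = \<eta> * \<rho> * H_SR * H_RD * P_S / \<sigma>D2;
         f = (\<lambda>x::real. min (x * C_SR)
                 (x * b + (1 - x) * ln (1 + m + c' * x / (1 - x))));
         Wl = lambertWm1 (- (a' / c') * exp (- (a' * (1 + m) / c')));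
         lam1 = (- (1 / a') * Wl - (1 + m) / c') / (1 - (1 / a') * Wl - (1 + m) / c');
         E = exp (lambertW0 ((c' - (1 + m)) / exp (1 + b)) + b + 1);
         lam2 = (E - (1 + m)) / (E + c' - (1 + m));
         lamS = max lam1 lam2
     in 0 < lamS \<and> lamS < 1 \<and> (\<forall>lam. 0 < lam \<and> lam < 1 \<longrightarrow> f lam \<le> f lamS)"
proof -
  have sD: "\<sigma>D2 > 0" using assms by simp
  have X: "H_SR*\<sigma>D2 - H_SD*\<sigma>a2 > 0"
  proof -
    have "H_SD*\<sigma>a2 < H_SD*\<sigma>D2" using assms by simp
    also have "\<dots> < H_SR*\<sigma>D2" using assms sD by simp
    finally show ?thesis by simp
  qed
  have q: "(H_SD * \<sigma>b2) / (H_SR * \<sigma>D2 - H_SD * \<sigma>a2) < 1 - \<rho>" using assms by simp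
  then have "H_SD * \<sigma>b2 < (1 - \<rho>) * (H_SR * \<sigma>D2 - H_SD * \<sigma>a2)" using X by (simp add: pos_divide_less_eq)
  then have key: "H_SD*((1-\<rho>)*\<sigma>a2+\<sigma>b2) < (1-\<rho>)*H_SR*\<sigma>D2" by (simp add: algebra_simps)
  have "(H_SD * \<sigma>b2) / (H_SR * \<sigma>D2 - H_SD * \<sigma>a2) > 0" using X assms by simp
  then have r1: "\<rho> < 1" using q by simp
  have den: "(1-\<rho>)*\<sigma>a2+\<sigma>b2 > 0" using r1 assms by (simp add: add_pos_pos)
  have "P_S*(H_SD*((1-\<rho>)*\<sigma>a2+\<sigma>b2)) < P_S*((1-\<rho>)*H_SR*\<sigma>D2)" using key assms by simp
  then have "P_S * H_SD / \<sigma>D2 < (1 - \<rho>) * P_S * H_SR / ((1 - \<rho>) * \<sigma>a2 + \<sigma>b2)"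
    using den sD by (intro frac_lt_helper) (auto simp: algebra_simps)
  moreover have "P_S * H_SD / \<sigma>D2 > 0" using assms sD by simp
  ultimately have lt: "ln (1 + P_S * H_SD / \<sigma>D2) < ln (1 + (1 - \<rho>) * P_S * H_SR / ((1 - \<rho>) * \<sigma>a2 + \<sigma>b2))"
    by simp
  have mpos: "P_S * H_SD / \<sigma>D2 > 0" using assms sD by simp
  have cpos: "\<eta> * \<rho> * H_SR * H_RD * P_S / \<sigma>D2 > 0" using assms sD by simp
  show ?thesis unfolding Let_def
    by (rule main[OF mpos cpos refl refl _ refl refl refl refl refl]) (use lt in simp)
qed

end
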